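(* Let $u,v\in F$ and let $\varphi$ be an endomorphism of $F$ such that $(u,v)\sim_{AC}(\varphi(u),\varphi(v))$. Then for all $u',v'\in F$, if $(u,v)\sim_{AC}(u',v')$ then $(u',v')\sim_{AC}(\varphi(u'),\varphi(v'))$.
   Context: $F=F(x,y)$ is the free group on $\{x,y\}$. The Andrews–Curtis (AC) moves on a pair $(r_1,r_2)\in F^2$ are: replace $r_i$ by $r_ir_j$ ($i\ne j$); replace $r_i$ by $r_i^{-1}$; replace $r_i$ by $w^{-1}r_iw$ for some $w\in F$. Two pairs are AC-equivalent, written $\sim_{AC}$, if one can be obtained from the other by a finite sequence of AC-moves. *)

theory Defs
  imports "HOL-Algebra.Group"
begin

text \<open>The free group F = F(x,y), realised as reduced words over the letters
x, y and their inverses.  A letter is a pair (inverted?, generator).\<close>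

datatype gen = X | Y

type_synonym letter = "bool \<times> gen"

fun inv_letter :: "letter \<Rightarrow> letter" where
  "inv_letter (b, g) = (\<not> b, g)"

fun reduced :: "letter list \<Rightarrow> bool" where
  "reduced (a # b # w) = (b \<noteq> inv_letter a \<and> reduced (b # w))"
| "reduced _ = True"

fun reduce :: "letter list \<Rightarrow> letter list" where
  "reduce [] = []"
| "reduce (a # w) = (case reduce w of
       [] \<Rightarrow> [a]
     | b # w' \<Rightarrow> (if b = inv_letter a then w' else a # b # w'))"

definition FG :: "letter list monoid" where
  "FG = \<lparr>carrier = {w. reduced w}, mult = (\<lambda>u v. reduce (u @ v)), one = []\<rparr>"

inductive ac_move :: "(letter list \<times> letter list) \<Rightarrow> (letter list \<times> letter list) \<Rightarrow> bool" where
  mult1: "\<lbrakk>r1 \<in> carrier FG; r2 \<in> carrier FG\<rbrakk> \<Longrightarrow> ac_move (r1, r2) (r1 \<otimes>\<^bsub>FG\<^esub> r2, r2)"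
| mult2: "\<lbrakk>r1 \<in> carrier FG; r2 \<in> carrier FG\<rbrakk> \<Longrightarrow> ac_move (r1, r2) (r1, r2 \<otimes>\<^bsub>FG\<^esub> r1)"
| inv1: "\<lbrakk>r1 \<in> carrier FG; r2 \<in> carrier FG\<rbrakk> \<Longrightarrow> ac_move (r1, r2) (inv\<^bsub>FG\<^esub> r1, r2)"
| inv2: "\<lbrakk>r1 \<in> carrier FG; r2 \<in> carrier FG\<rbrakk> \<Longrightarrow> ac_move (r1, r2) (r1, inv\<^bsub>FG\<^esub> r2)"
| conj1: "\<lbrakk>r1 \<in> carrier FG; r2 \<in> carrier FG; w \<in> carrier FG\<rbrakk> \<Longrightarrow>
            ac_move (r1, r2) (inv\<^bsub>FG\<^esub> w \<otimes>\<^bsub>FG\<^esub> r1 \<otimes>\<^bsub>FG\<^esub> w, r2)"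
| conj2: "\<lbrakk>r1 \<in> carrier FG; r2 \<in> carrier FG; w \<in> carrier FG\<rbrakk> \<Longrightarrow>
            ac_move (r1, r2) (r1, inv\<^bsub>FG\<^esub> w \<otimes>\<^bsub>FG\<^esub> r2 \<otimes>\<^bsub>FG\<^esub> w)"

definition ac_equiv :: "(letter list \<times> letter list) \<Rightarrow> (letter list \<times> letter list) \<Rightarrow> bool" where
  "ac_equiv = ac_move\<^sup>*\<^sup>*"

end

theory Submission
  imports Defs
begin

fun cr :: "letter \<Rightarrow> letter list \<Rightarrow> letter list" where
  "cr a [] = [a]"
| "cr a (b # w) = (if b = inv_letter a then w else a # b # w)"

lemma reduce_cons: "reduce (a # w) = cr a (reduce w)"
  by (simp split: list.split)

lemma inv_inv_letter[simp]: "inv_letter (inv_letter a) = a"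
  by (cases a) auto

lemma reduced_cr: "reduced w \<Longrightarrow> reduced (cr a w)"
  by (cases w rule: reduced.cases) auto

lemma reduced_reduce: "reduced (reduce w)"
  by (induction w) (auto simp: reduce_cons reduced_cr simp del: reduce.simps(2))

lemma reduce_reduced: "reduced w \<Longrightarrow> reduce w = w"
  by (induction w rule: reduced.induct) (auto simp: reduce_cons simp del: reduce.simps(2))

lemma reduce_idem[simp]: "reduce (reduce w) = reduce w"
  by (simp add: reduce_reduced reduced_reduce)

lemma reduce_app_right: "reduce (u @ reduce v) = reduce (u @ v)"
  by (induction u) (auto simp: reduce_cons simp del: reduce.simps(2))

lemma cr_cancel: "reduced x \<Longrightarrow> cr a (cr (inv_letter a) x) = x"
  by (cases x rule: reduced.cases) auto

lemma cr_app: "reduced w \<Longrightarrow> reduce (cr a w @ v) = cr a (reduce (w @ v))"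
proof (cases w)
  case Nil then show ?thesis by (simp add: reduce_cons del: reduce.simps(2))
next
  case (Cons b w')
  assume r: "reduced w"
  show ?thesis
  proof (cases "b = inv_letter a")
    case True
    have "reduced (reduce (w' @ v))" by (rule reduced_reduce)
    then show ?thesis using Cons True
      by (simp add: reduce_cons cr_cancel del: reduce.simps(2))
  next
    case False
    then show ?thesis using Cons by (simp add: reduce_cons del: reduce.simps(2))
  qed
qed

lemma reduce_app_left: "reduce (reduce u @ v) = reduce (u @ v)"
proof (induction u)
  case Nil then show ?case by (simp add: reduce_app_right[of "[]", simplified])
next
  case (Cons a u)
  have "reduce (reduce (a # u) @ v) = reduce (cr a (reduce u) @ v)"
    by (simp add: reduce_cons del: reduce.simps(2))
  also have "\<dots> = cr a (reduce (reduce u @ v))" by (rule cr_app[OF reduced_reduce])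
  also have "\<dots> = reduce ((a # u) @ v)" using Cons by (simp add: reduce_cons del: reduce.simps(2))
  finally show ?case .
qed

definition invw :: "letter list \<Rightarrow> letter list" where
  "invw w = rev (map inv_letter w)"

lemma invw_cancel: "reduce (invw w @ w) = []"
proof (induction w rule: rev_induct)
  case Nil then show ?case by (simp add: invw_def)
next
  case (snoc a w)
  have "reduce (invw (w @ [a]) @ w @ [a]) = reduce (inv_letter a # (invw w @ w) @ [a])"
    by (simp add: invw_def)
  also have "\<dots> = cr (inv_letter a) (reduce ((invw w @ w) @ [a]))"
    by (simp add: reduce_cons del: reduce.simps(2))
  also have "reduce ((invw w @ w) @ [a]) = reduce (reduce (invw w @ w) @ [a])"
    by (simp add: reduce_app_left)
  also have "\<dots> = [a]" using snoc by simp
  finally show ?case by simp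
qed

lemma group_FG: "group FG"
proof (rule groupI)
  fix x y assume "x \<in> carrier FG" "y \<in> carrier FG"
  then show "x \<otimes>\<^bsub>FG\<^esub> y \<in> carrier FG" by (simp add: FG_def reduced_reduce)
next
  show "\<one>\<^bsub>FG\<^esub> \<in> carrier FG" by (simp add: FG_def)
next
  fix x y z assume "x \<in> carrier FG" "y \<in> carrier FG" "z \<in> carrier FG"
  show "x \<otimes>\<^bsub>FG\<^esub> y \<otimes>\<^bsub>FG\<^esub> z = x \<otimes>\<^bsub>FG\<^esub> (y \<otimes>\<^bsub>FG\<^esub> z)"
    by (simp add: FG_def reduce_app_left reduce_app_right)
next
  fix x assume "x \<in> carrier FG"
  then show "\<one>\<^bsub>FG\<^esub> \<otimes>\<^bsub>FG\<^esub> x = x" by (simp add: FG_def reduce_reduced)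
next
  fix x assume "x \<in> carrier FG"
  show "\<exists>y\<in>carrier FG. y \<otimes>\<^bsub>FG\<^esub> x = \<one>\<^bsub>FG\<^esub>"
    by (rule bexI[of _ "reduce (invw x)"])
       (simp_all add: FG_def reduce_app_left invw_cancel reduced_reduce)
qed

interpretation G: group FG by (rule group_FG)

lemma move_closed: "ac_move p q \<Longrightarrow> fst q \<in> carrier FG \<and> snd q \<in> carrier FG"
  by (induction rule: ac_move.induct) auto

lemma move_sym: "ac_move p q \<Longrightarrow> ac_equiv q p"
proof (induction rule: ac_move.induct)
  case (mult1 r1 r2)
  have "ac_move (r1 \<otimes>\<^bsub>FG\<^esub> r2, r2) (r1 \<otimes>\<^bsub>FG\<^esub> r2, inv\<^bsub>FG\<^esub> r2)"
    using mult1 by (intro ac_move.inv2) auto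
  moreover have "ac_move (r1 \<otimes>\<^bsub>FG\<^esub> r2, inv\<^bsub>FG\<^esub> r2) (r1, inv\<^bsub>FG\<^esub> r2)"
    using ac_move.mult1[of "r1 \<otimes>\<^bsub>FG\<^esub> r2" "inv\<^bsub>FG\<^esub> r2"] mult1
    by (simp add: G.m_assoc)
  moreover have "ac_move (r1, inv\<^bsub>FG\<^esub> r2) (r1, r2)"
    using ac_move.inv2[of r1 "inv\<^bsub>FG\<^esub> r2"] mult1 by simp
  ultimately show ?case unfolding ac_equiv_def
    by (meson converse_rtranclp_into_rtranclp rtranclp.rtrancl_refl)
next
  case (mult2 r1 r2)
  have "ac_move (r1, r2 \<otimes>\<^bsub>FG\<^esub> r1) (inv\<^bsub>FG\<^esub> r1, r2 \<otimes>\<^bsub>FG\<^esub> r1)"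
    using mult2 by (intro ac_move.inv1) auto
  moreover have "ac_move (inv\<^bsub>FG\<^esub> r1, r2 \<otimes>\<^bsub>FG\<^esub> r1) (inv\<^bsub>FG\<^esub> r1, r2)"
    using ac_move.mult2[of "inv\<^bsub>FG\<^esub> r1" "r2 \<otimes>\<^bsub>FG\<^esub> r1"] mult2
    by (simp add: G.m_assoc)
  moreover have "ac_move (inv\<^bsub>FG\<^esub> r1, r2) (r1, r2)"
    using ac_move.inv1[of "inv\<^bsub>FG\<^esub> r1" r2] mult2 by simp
  ultimately show ?case unfolding ac_equiv_def
    by (meson converse_rtranclp_into_rtranclp rtranclp.rtrancl_refl)
next
  case (inv1 r1 r2)
  then show ?case using ac_move.inv1[of "inv\<^bsub>FG\<^esub> r1" r2] unfolding ac_equiv_def by auto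
next
  case (inv2 r1 r2)
  then show ?case using ac_move.inv2[of r1 "inv\<^bsub>FG\<^esub> r2"] unfolding ac_equiv_def by auto
next
  case (conj1 r1 r2 w)
  have "ac_move (inv\<^bsub>FG\<^esub> w \<otimes>\<^bsub>FG\<^esub> r1 \<otimes>\<^bsub>FG\<^esub> w, r2)
     (inv\<^bsub>FG\<^esub> (inv\<^bsub>FG\<^esub> w) \<otimes>\<^bsub>FG\<^esub> (inv\<^bsub>FG\<^esub> w \<otimes>\<^bsub>FG\<^esub> r1 \<otimes>\<^bsub>FG\<^esub> w) \<otimes>\<^bsub>FG\<^esub> inv\<^bsub>FG\<^esub> w, r2)"
    using conj1 by (intro ac_move.conj1) auto
  moreover have "inv\<^bsub>FG\<^esub> (inv\<^bsub>FG\<^esub> w) \<otimes>\<^bsub>FG\<^esub> (inv\<^bsub>FG\<^esub> w \<otimes>\<^bsub>FG\<^esub> r1 \<otimes>\<^bsub>FG\<^esub> w) \<otimes>\<^bsub>FG\<^esub> inv\<^bsub>FG\<^esub> w = r1"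
    using conj1 by (simp add: G.m_assoc flip: G.m_assoc[of w])
  ultimately show ?case unfolding ac_equiv_def by auto
next
  case (conj2 r1 r2 w)
  have "ac_move (r1, inv\<^bsub>FG\<^esub> w \<otimes>\<^bsub>FG\<^esub> r2 \<otimes>\<^bsub>FG\<^esub> w)
     (r1, inv\<^bsub>FG\<^esub> (inv\<^bsub>FG\<^esub> w) \<otimes>\<^bsub>FG\<^esub> (inv\<^bsub>FG\<^esub> w \<otimes>\<^bsub>FG\<^esub> r2 \<otimes>\<^bsub>FG\<^esub> w) \<otimes>\<^bsub>FG\<^esub> inv\<^bsub>FG\<^esub> w)"
    using conj2 by (intro ac_move.conj2) auto
  moreover have "inv\<^bsub>FG\<^esub> (inv\<^bsub>FG\<^esub> w) \<otimes>\<^bsub>FG\<^esub> (inv\<^bsub>FG\<^esub> w \<otimes>\<^bsub>FG\<^esub> r2 \<otimes>\<^bsub>FG\<^esub> w) \<otimes>\<^bsub>FG\<^esub> inv\<^bsub>FG\<^esub> w = r2"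
    using conj2 by (simp add: G.m_assoc flip: G.m_assoc[of w])
  ultimately show ?case unfolding ac_equiv_def by auto
qed

lemma ac_sym: "ac_equiv p q \<Longrightarrow> ac_equiv q p"
  unfolding ac_equiv_def
proof (induction rule: rtranclp_induct)
  case base then show ?case by simp
next
  case (step y z)
  then show ?case using move_sym[OF step(2)] unfolding ac_equiv_def by auto
qed

lemma move_hom:
  assumes h: "\<phi> \<in> hom FG FG"
  shows "ac_move p q \<Longrightarrow> ac_move (\<phi> (fst p), \<phi> (snd p)) (\<phi> (fst q), \<phi> (snd q))"
proof -
  interpret H: group_hom FG FG \<phi> using h group_FG by (simp add: group_hom_def group_hom_axioms_def)
  have c: "\<And>x. x \<in> carrier FG \<Longrightarrow> \<phi> x \<in> carrier FG" by simp
  show "ac_move p q \<Longrightarrow> ?thesis"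
  proof (induction rule: ac_move.induct)
    case (mult1 r1 r2) then show ?case by (simp add: ac_move.mult1)
  next
    case (mult2 r1 r2) then show ?case by (simp add: ac_move.mult2)
  next
    case (inv1 r1 r2) then show ?case by (simp add: ac_move.inv1)
  next
    case (inv2 r1 r2) then show ?case by (simp add: ac_move.inv2)
  next
    case (conj1 r1 r2 w) then show ?case by (simp add: ac_move.conj1)
  next
    case (conj2 r1 r2 w) then show ?case by (simp add: ac_move.conj2)
  qed
qed

lemma ac_hom:
  assumes h: "\<phi> \<in> hom FG FG" and "ac_equiv (a, b) (c, d)"
  shows "ac_equiv (\<phi> a, \<phi> b) (\<phi> c, \<phi> d)"
proof -
  have "ac_move\<^sup>*\<^sup>* p q \<Longrightarrow> ac_move\<^sup>*\<^sup>* (\<phi> (fst p), \<phi> (snd p)) (\<phi> (fst q), \<phi> (snd q))" for p q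
  proof (induction rule: rtranclp_induct)
    case base then show ?case by simp
  next
    case (step y z) then show ?case using move_hom[OF h step(2)] by auto
  qed
  from this[of "(a,b)" "(c,d)"] assms show ?thesis unfolding ac_equiv_def by simp
qed

lemma ac_trans: "ac_equiv p q \<Longrightarrow> ac_equiv q r \<Longrightarrow> ac_equiv p r"
  unfolding ac_equiv_def by auto

theorem lemma3:
  fixes u v :: "letter list" and \<phi> :: "letter list \<Rightarrow> letter list"
  assumes "u \<in> carrier FG" and "v \<in> carrier FG"
    and "\<phi> \<in> hom FG FG"
    and "ac_equiv (u, v) (\<phi> u, \<phi> v)"
  shows "\<forall>u' v'. u' \<in> carrier FG \<longrightarrow> v' \<in> carrier FG \<longrightarrow>
           ac_equiv (u, v) (u', v') \<longrightarrow> ac_equiv (u', v') (\<phi> u', \<phi> v')"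
  using assms ac_sym ac_hom ac_trans by meson

end
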